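(* Let $M\ge 2$ and let $\varphi_1,\dots,\varphi_M$ be i.i.d. $\mathcal{N}(\nu,\sigma_\varphi^2)$ with $\sigma_\varphi>0$. Let $\bar\varphi=\frac1M\sum_k\varphi_k$, $\hat\sigma_\varphi^2=\frac{1}{M-1}\sum_{k=1}^M(\varphi_k-\bar\varphi)^2$, $\hat\sigma_\varphi=\sqrt{\hat\sigma_\varphi^2}$. Fix $\alpha,\gamma\in(0,1)$ and $\varphi_{MAP}\in\mathbb{R}$, let $z_{1-\gamma/2}$ be the $(1-\gamma/2)$-quantile of the standard normal distribution, let $\chi^2_{M-1,p}$ denote the $p$-quantile of the chi-squared distribution with $M-1$ degrees of freedom, and set $L=\sqrt{(M-1)/\chi^2_{M-1,1-\alpha/2}}$, $R=\sqrt{(M-1)/\chi^2_{M-1,\alpha/2}}$. Define the credible interval endpoints $\underline{\varphi}^*=\varphi_{MAP}-z_{1-\gamma/2}\sigma_\varphi$, $\overline{\varphi}^*=\varphi_{MAP}+z_{1-\gamma/2}\sigma_\varphi$, and the random intervals $\underline{I}=[\varphi_{MAP}-z_{1-\gamma/2}\hat\sigma_\varphi R,\ \varphi_{MAP}-z_{1-\gamma/2}\hat\sigma_\varphi L]$, $\overline{I}=[\varphi_{MAP}+z_{1-\gamma/2}\hat\sigma_\varphi L,\ \varphi_{MAP}+z_{1-\gamma/2}\hat\sigma_\varphi R]$. Then $$\mathbb{P}\{\underline{\varphi}^*\in\underline{I}\text{ and }\overline{\varphi}^*\in\overline{I}\}=1-\alpha.$$ Moreover, $\mathbb{P}\{[\varphi_{MAP}-z_{1-\gamma/2}\hat\sigma_\varphi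 R,\ \varphi_{MAP}+z_{1-\gamma/2}\hat\sigma_\varphi R]\supset[\underline{\varphi}^*,\overline{\varphi}^*]\}=1-\alpha/2$ and $\mathbb{P}\{[\varphi_{MAP}-z_{1-\gamma/2}\hat\sigma_\varphi L,\ \varphi_{MAP}+z_{1-\gamma/2}\hat\sigma_\varphi L]\subset[\underline{\varphi}^*,\overline{\varphi}^*]\}=1-\alpha/2$.
   Context: In the application, $\varphi_k=\mathbf{h}^\top\mathbf{c}^k_{MAP}$ are values of a linear functional on i.i.d. Gaussian Monte Carlo MAP estimators, $\sigma_\varphi^2=\mathbf{h}^\top\bm{\Sigma}\mathbf{h}$ is the posterior variance of the functional, and $[\underline{\varphi}^*,\overline{\varphi}^*]$ is the Gaussian $(1-\gamma)\times100\%$ Bayesian credible interval for the functional; $L$ and $R$ are called the deflation and inflation factors. *)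

theory Defs
  imports "HOL-Probability.Probability"
begin

definition chi2_density :: "nat \<Rightarrow> real \<Rightarrow> real" where
  "chi2_density k x = (if x > 0 then
      x powr (real k / 2 - 1) * exp (- x / 2) / (2 powr (real k / 2) * Gamma (real k / 2))
    else 0)"

definition chi2_distr :: "nat \<Rightarrow> real measure" where
  "chi2_distr k = density lborel (\<lambda>x. ennreal (chi2_density k x))"

definition chi2_quantile :: "nat \<Rightarrow> real \<Rightarrow> real" where
  "chi2_quantile k p = (THE x. x > 0 \<and> cdf (chi2_distr k) x = p)"

definition std_normal_quantile :: "real \<Rightarrow> real" where
  "std_normal_quantile p =
     (THE z. cdf (density lborel (\<lambda>x. ennreal (std_normal_density x))) z = p)"

end

theory Submission
  imports Defs
begin

lemma chi2_density_nonneg[simp]: "0 \<le> chi2_density k x"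
proof (cases "k = 0")
  case True then show ?thesis by (simp add: chi2_density_def)
next
  case False then show ?thesis
    unfolding chi2_density_def by (auto intro!: divide_nonneg_pos mult_pos_pos Gamma_real_pos)
qed

lemma chi2_density_pos: "k \<ge> 1 \<Longrightarrow> x > 0 \<Longrightarrow> 0 < chi2_density k x"
  unfolding chi2_density_def by (auto intro!: divide_pos_pos mult_pos_pos Gamma_real_pos)

lemma borel_measurable_chi2_density[measurable]: "chi2_density k \<in> borel_measurable borel"
  unfolding chi2_density_def[abs_def] by measurable

lemma beta_nn:
  assumes a: "a > 0" and b: "b > (0::real)"
  shows "(\<integral>\<^sup>+t. ennreal (t powr (a - 1) * (1 - t) powr (b - 1)) * indicator {0<..<1} t \<partial>lborel)
     = ennreal (Beta a b)"
proof -
  have "((\<lambda>t. t powr (a - 1) * (1 - t) powr (b - 1)) has_integral Beta a b) {0<..<1}"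
    using has_integral_Beta_real[OF a b] by (simp add: has_integral_Icc_iff_Ioo)
  then show ?thesis
    by (intro nn_integral_has_integral_lebesgue') auto
qed

lemma conv_point:
  assumes k: "k \<ge> 1"
  shows "(\<integral>\<^sup>+s. ennreal (chi2_density k s) * ennreal (chi2_density 1 (x - s)) \<partial>lborel)
       = ennreal (chi2_density (Suc k) x)"
proof (cases "x > 0")
  case False
  have *: "ennreal (chi2_density k s) * ennreal (chi2_density 1 (x - s)) = 0" for s
      using False by (cases "s > 0") (auto simp: chi2_density_def)
  have "chi2_density (Suc k) x = 0" using False by (simp add: chi2_density_def)
  then show ?thesis by (simp only: *) simp
next
  case True
  define a where "a = real k / 2"
  have a: "a > 0" using k by (simp add: a_def)
  define c where "c = 1 / (2 powr a * Gamma a * (2 powr (1/2) * Gamma (1/2)))"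
  have c: "c > 0" using a unfolding c_def by (auto intro!: mult_pos_pos Gamma_real_pos)
  define K where "K = c * x powr (a - 1) * x powr (-1/2) * exp (- x / 2)"
  have K: "K \<ge> 0" using c unfolding K_def by auto
  have "(\<integral>\<^sup>+s. ennreal (chi2_density k s) * ennreal (chi2_density 1 (x - s)) \<partial>lborel)
     = (\<integral>\<^sup>+s. ennreal (c * (s powr (a - 1) * (x - s) powr (-1/2)) * exp (- x / 2)) * indicator {0<..<x} s \<partial>lborel)"
  proof (intro nn_integral_cong)
    fix s :: real
    show "ennreal (chi2_density k s) * ennreal (chi2_density 1 (x - s)) =
      ennreal (c * (s powr (a - 1) * (x - s) powr (-1/2)) * exp (- x / 2)) * indicator {0<..<x} s"
    proof (cases "0 < s \<and> s < x")
      case True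
      have "exp (- s / 2) * exp (- (x - s) / 2) = exp (- x / 2)"
        by (simp add: exp_add[symmetric] field_simps)
      then have "chi2_density k s * chi2_density 1 (x - s) = c * (s powr (a - 1) * (x - s) powr (-1/2)) * exp (- x / 2)"
        using True by (simp add: chi2_density_def c_def a_def field_simps)
      then show ?thesis using True
        by (simp add: ennreal_mult'[symmetric])
    next
      case False
      then show ?thesis by (auto simp: chi2_density_def)
    qed
  qed
  also have "\<dots> = ennreal x * (\<integral>\<^sup>+t. ennreal (c * ((x * t) powr (a - 1) * (x - x * t) powr (-1/2)) * exp (- x / 2)) * indicator {0<..<x} (x * t) \<partial>lborel)"
    using True by (subst nn_integral_real_affine[where c = x and t = 0]) auto
  also have "\<dots> = ennreal x * (\<integral>\<^sup>+t. ennreal K * (ennreal (t powr (a - 1) * (1 - t) powr (1/2 - 1)) * indicator {0<..<1} t) \<partial>lborel)"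
  proof -
    have pw: "ennreal (c * ((x * t) powr (a - 1) * (x - x * t) powr (-1/2)) * exp (- x / 2)) * indicator {0<..<x} (x * t) =
         ennreal K * (ennreal (t powr (a - 1) * (1 - t) powr (1/2 - 1)) * indicator {0<..<1} t)" for t
    proof (cases "0 < t \<and> t < 1")
      case True
      have "x - x * t = x * (1 - t)" by (simp add: algebra_simps)
      moreover have "0 < x * t" "x * t < x" using True \<open>x > 0\<close> by auto
      ultimately show ?thesis using True \<open>x > 0\<close> K
        by (simp add: K_def powr_mult ennreal_mult[symmetric] mult_ac)
    next
      case False
      then have "\<not> (0 < x * t \<and> x * t < x)" using \<open>x > 0\<close>
        by (auto simp: zero_less_mult_iff)
      then show ?thesis using False by auto
    qed
    then show ?thesis by simp
  qed
  also have "\<dots> = ennreal (x * K * Beta a (1/2))"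
  proof -
    have "(\<integral>\<^sup>+t. ennreal K * (ennreal (t powr (a - 1) * (1 - t) powr (1/2 - 1)) * indicator {0<..<1} t) \<partial>lborel)
      = ennreal K * ennreal (Beta a (1/2))"
      using a beta_nn[of a "1/2"] by (subst nn_integral_cmult) auto
    moreover have "Beta a (1/2) \<ge> 0" using a by (simp add: Beta_def Gamma_real_pos less_imp_le)
    ultimately show ?thesis using K True
      by (simp add: ennreal_mult'[symmetric] mult_ac)
  qed
  also have "x * K * Beta a (1/2) = chi2_density (Suc k) x"
  proof -
    have ga: "Gamma a > 0" "Gamma (1/2::real) > 0" "Gamma (a + 1/2) > 0" using a
      by (auto intro!: Gamma_real_pos)
    have B: "Beta a (1/2) = Gamma a * Gamma (1/2) / Gamma (a + 1/2)"
      by (simp add: Beta_altdef rGamma_inverse_Gamma field_simps)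
    have e1: "real (Suc k) / 2 = a + 1/2" by (simp add: a_def field_simps)
    have xp: "x * x powr (a - 1) * x powr (-1/2) = x powr (a + 1/2 - 1)"
      using True by (simp add: powr_add[symmetric] powr_mult_base)
    have tp: "2 powr a * 2 powr (1/2) = (2::real) powr (a + 1/2)"
      by (simp add: powr_add)
    have "x * K * Beta a (1/2) = (x * x powr (a - 1) * x powr (-1/2)) * exp (- x / 2) / ((2 powr a * 2 powr (1/2)) * Gamma (a + 1/2))"
      using ga by (simp add: K_def c_def B field_simps Gamma_one_half_real)
    also have "\<dots> = x powr (a + 1/2 - 1) * exp (- x / 2) / (2 powr (a + 1/2) * Gamma (a + 1/2))"
      by (simp only: xp tp)
    also have "\<dots> = chi2_density (Suc k) x"
      unfolding chi2_density_def e1 using True by simp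
    finally show ?thesis .
  qed
  finally show ?thesis .
qed

abbreviation "N01 \<equiv> density lborel (\<lambda>x. ennreal (std_normal_density x))"

lemma chi1_point: "w > 0 \<Longrightarrow> chi2_density 1 (w\<^sup>2) * (2 * w) = 2 * std_normal_density w"
proof -
  assume w: "w > 0"
  have w2: "w\<^sup>2 = w powr 2" using w by (simp add: powr_realpow)
  have "(w\<^sup>2) powr (1/2 - 1) = 1 / w"
    unfolding w2 using w by (simp add: powr_powr powr_minus_divide)
  moreover have "2 powr (1/2) * sqrt pi = sqrt (2 * pi)"
    by (simp add: powr_half_sqrt real_sqrt_mult)
  ultimately show ?thesis using w
    by (simp add: chi2_density_def std_normal_density_def Gamma_one_half_real field_simps)
qed

lemma chi1_Iic_pos:
  assumes t: "t > 0"
  shows "emeasure (chi2_distr 1) {..t} = (\<integral>\<^sup>+w. ennreal (2 * std_normal_density w) * indicator {0<..sqrt t} w \<partial>lborel)"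
proof -
  have "emeasure (chi2_distr 1) {..t} = (\<integral>\<^sup>+y. ennreal (chi2_density 1 y) * indicator {..t} y \<partial>lborel)"
    unfolding chi2_distr_def by (subst emeasure_density) auto
  also have "\<dots> = (\<integral>\<^sup>+y. ennreal (chi2_density 1 y * indicator {0..t} y) \<partial>lborel)"
    by (intro nn_integral_cong) (auto simp: chi2_density_def indicator_def)
  also have "\<dots> = (\<integral>\<^sup>+w. ennreal (chi2_density 1 (w\<^sup>2) * (2 * w) * indicator {0..sqrt t} w) \<partial>lborel)"
  proof -
    have S: "(\<integral>\<^sup>+y. ennreal (chi2_density 1 y * indicator {(\<lambda>w. w\<^sup>2) 0..(\<lambda>w. w\<^sup>2) (sqrt t)} y) \<partial>lborel)
       = (\<integral>\<^sup>+w. ennreal (chi2_density 1 ((\<lambda>w. w\<^sup>2) w) * (\<lambda>w. 2 * w) w * indicator {0..sqrt t} w) \<partial>lborel)"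
    proof (rule nn_integral_substitution)
      show "set_borel_measurable borel {(\<lambda>w. w\<^sup>2) 0..(\<lambda>w. w\<^sup>2) (sqrt t)} (chi2_density 1)"
        unfolding set_borel_measurable_def by measurable
    qed (use t in \<open>auto intro!: derivative_eq_intros continuous_intros\<close>)
    show ?thesis using S t by simp
  qed
  also have "\<dots> = (\<integral>\<^sup>+w. ennreal (2 * std_normal_density w) * indicator {0<..sqrt t} w \<partial>lborel)"
  proof (intro nn_integral_cong)
    fix w :: real
    show "ennreal (chi2_density 1 (w\<^sup>2) * (2 * w) * indicator {0..sqrt t} w) =
      ennreal (2 * std_normal_density w) * indicator {0<..sqrt t} w"
    proof (cases "w > 0")
      case True then show ?thesis using chi1_point[OF True] by (simp add: indicator_def mult.assoc)
    next
      case False then show ?thesis by (auto simp: indicator_def chi2_density_def)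
    qed
  qed
  finally show ?thesis .
qed

lemma sq_vimage_sets[measurable]: "(\<lambda>w::real. w\<^sup>2) -` {..t} \<in> sets borel"
  using measurable_sets[of "\<lambda>w::real. w\<^sup>2" borel borel "{..t}"] by simp


lemma sets_chi2[simp, measurable_cong]: "sets (chi2_distr k) = sets borel"
  by (simp add: chi2_distr_def)

lemma space_chi2[simp]: "space (chi2_distr k) = UNIV"
  by (simp add: chi2_distr_def)

lemma sq_Iic_pos:
  assumes t: "t > 0"
  shows "emeasure (distr N01 borel (\<lambda>w. w\<^sup>2)) {..t} = (\<integral>\<^sup>+w. ennreal (2 * std_normal_density w) * indicator {0<..sqrt t} w \<partial>lborel)"
proof -
  define s where "s = sqrt t"
  have s: "s > 0" using t by (simp add: s_def)
  have "emeasure (distr N01 borel (\<lambda>w. w\<^sup>2)) {..t} = emeasure N01 ((\<lambda>w. w\<^sup>2) -` {..t} \<inter> space N01)"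
    by (subst emeasure_distr) auto
  also have "\<dots> = (\<integral>\<^sup>+w. ennreal (std_normal_density w) * indicator ((\<lambda>w. w\<^sup>2) -` {..t}) w \<partial>lborel)"
    by (subst emeasure_density) auto
  also have "\<dots> = (\<integral>\<^sup>+w. ennreal (std_normal_density w) * indicator {0<..s} w
        + ennreal (std_normal_density (0 + (-1) * w)) * indicator {0<..s} (0 + (-1) * w)
        + ennreal (std_normal_density w) * indicator {0} w \<partial>lborel)"
  proof (intro nn_integral_cong)
    fix w :: real
    have sq: "w\<^sup>2 \<le> t \<longleftrightarrow> \<bar>w\<bar> \<le> s"
      unfolding s_def using t by (metis real_le_rsqrt real_sqrt_abs real_sqrt_le_iff abs_ge_zero sqrt_le_D)
    show "ennreal (std_normal_density w) * indicator ((\<lambda>w. w\<^sup>2) -` {..t}) w =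
        ennreal (std_normal_density w) * indicator {0<..s} w
        + ennreal (std_normal_density (0 + (-1) * w)) * indicator {0<..s} (0 + (-1) * w)
        + ennreal (std_normal_density w) * indicator {0} w"
      using sq s by (cases "w > 0"; cases "w = 0") (auto simp: indicator_def std_normal_density_def)
  qed
  also have "\<dots> = (\<integral>\<^sup>+w. ennreal (std_normal_density w) * indicator {0<..s} w \<partial>lborel)
        + (\<integral>\<^sup>+w. ennreal (std_normal_density (0 + (-1) * w)) * indicator {0<..s} (0 + (-1) * w) \<partial>lborel)
        + (\<integral>\<^sup>+w. ennreal (std_normal_density w) * indicator {0} w \<partial>lborel)"
    by (simp add: nn_integral_add)
  also have "(\<integral>\<^sup>+w. ennreal (std_normal_density (0 + (-1) * w)) * indicator {0<..s} (0 + (-1) * w) \<partial>lborel)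
      = (\<integral>\<^sup>+w. ennreal (std_normal_density w) * indicator {0<..s} w \<partial>lborel)"
    using nn_integral_real_affine[where f = "\<lambda>w. ennreal (std_normal_density w) * indicator {0<..s} w" and c = "-1" and t = 0]
    by simp
  also have "(\<integral>\<^sup>+w. ennreal (std_normal_density w) * indicator {0} w \<partial>lborel) = 0"
  proof -
    have "(\<integral>\<^sup>+w. ennreal (std_normal_density w) * indicator {0} w \<partial>lborel) = (\<integral>\<^sup>+(w::real). 0 \<partial>lborel)"
      by (intro nn_integral_cong_AE) (use AE_lborel_singleton[of 0] in \<open>auto elim!: eventually_mono\<close>)
    then show ?thesis by simp
  qed
  also have "(\<integral>\<^sup>+w. ennreal (std_normal_density w) * indicator {0<..s} w \<partial>lborel)
      + (\<integral>\<^sup>+w. ennreal (std_normal_density w) * indicator {0<..s} w \<partial>lborel) + 0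
      = (\<integral>\<^sup>+w. ennreal (2 * std_normal_density w) * indicator {0<..s} w \<partial>lborel)"
    by (simp add: ennreal_mult nn_integral_cmult mult.assoc flip: mult_2)
  finally show ?thesis unfolding s_def .
qed

lemma sq_Iic_nonpos:
  assumes t: "t \<le> 0"
  shows "emeasure (distr N01 borel (\<lambda>w. w\<^sup>2)) {..t} = 0"
proof -
  have "emeasure (distr N01 borel (\<lambda>w. w\<^sup>2)) {..t} = emeasure N01 ((\<lambda>w. w\<^sup>2) -` {..t} \<inter> space N01)"
    by (subst emeasure_distr) auto
  also have "\<dots> = (\<integral>\<^sup>+w. ennreal (std_normal_density w) * indicator ((\<lambda>w. w\<^sup>2) -` {..t}) w \<partial>lborel)"
    by (subst emeasure_density) auto
  also have "\<dots> = (\<integral>\<^sup>+(w::real). 0 \<partial>lborel)"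
  proof (intro nn_integral_cong_AE)
    show "AE w in lborel. ennreal (std_normal_density w) * indicator ((\<lambda>w. w\<^sup>2) -` {..t}) w = 0"
      using AE_lborel_singleton[of 0]
    proof (rule eventually_mono)
      fix w :: real assume "w \<noteq> 0"
      then have "w\<^sup>2 > 0" by simp
      then have "\<not> w\<^sup>2 \<le> t" using t by linarith
      then show "ennreal (std_normal_density w) * indicator ((\<lambda>w. w\<^sup>2) -` {..t}) w = 0"
        by (simp add: indicator_def)
    qed
  qed
  finally show ?thesis by simp
qed

lemma chi1_Iic_nonpos:
  assumes t: "t \<le> 0"
  shows "emeasure (chi2_distr 1) {..t} = 0"
proof -
  have "emeasure (chi2_distr 1) {..t} = (\<integral>\<^sup>+y. ennreal (chi2_density 1 y) * indicator {..t} y \<partial>lborel)"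
    unfolding chi2_distr_def by (subst emeasure_density) auto
  also have "\<dots> = 0"
  proof -
    have *: "ennreal (chi2_density 1 y) * indicator {..t} y = 0" for y
      using t by (auto simp: chi2_density_def indicator_def)
    show ?thesis by (simp only: *) simp
  qed
  finally show ?thesis .
qed

lemma chi1_Iic: "emeasure (chi2_distr 1) {..t} = emeasure (distr N01 borel (\<lambda>w. w\<^sup>2)) {..t}"
  using chi1_Iic_pos[of t] sq_Iic_pos[of t] chi1_Iic_nonpos[of t] sq_Iic_nonpos[of t]
  by (cases "t > 0") simp_all

lemma prob_N01: "prob_space N01"
  by (rule prob_space_normal_density) simp

lemma chi1_distr: "distr N01 borel (\<lambda>w. w\<^sup>2) = chi2_distr 1"
proof -
  interpret N: prob_space N01 by (rule prob_N01)
  let ?D = "distr N01 borel (\<lambda>w. w\<^sup>2)"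
  interpret D: prob_space ?D by (rule N.prob_space_distr) simp
  have U: "(\<Union>n. {..real n}) = (UNIV::real set)"
  proof (intro set_eqI iffI)
    fix x :: real
    obtain n where "x \<le> real n" using real_arch_simple by blast
    then show "x \<in> (\<Union>n. {..real n})" by auto
  qed auto
  have "emeasure (chi2_distr 1) UNIV = emeasure (chi2_distr 1) (\<Union>n. {..real n})"
    by (simp only: U)
  also have "\<dots> = (SUP n. emeasure (chi2_distr 1) {..real n})"
    by (rule SUP_emeasure_incseq[symmetric]) (auto simp: incseq_def)
  also have "\<dots> \<le> 1"
  proof (intro SUP_least)
    fix n :: nat
    have "emeasure (chi2_distr 1) {..real n} = emeasure ?D {..real n}" by (rule chi1_Iic)
    then show "emeasure (chi2_distr 1) {..real n} \<le> 1" using D.emeasure_le_1 by simp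
  qed
  finally have fin: "emeasure (chi2_distr 1) UNIV \<noteq> \<infinity>"
    by (auto simp: top_unique)
  have "finite_measure (chi2_distr 1)" by (rule finite_measureI) (use fin in simp)
  then have f1: "finite_borel_measure (chi2_distr 1)"
    unfolding finite_borel_measure_def finite_borel_measure_axioms_def by simp
  have "finite_measure ?D" by (rule finite_measureI) simp
  then have f2: "finite_borel_measure ?D"
    unfolding finite_borel_measure_def finite_borel_measure_axioms_def by simp
  show ?thesis
  proof (rule cdf_unique'[OF f2 f1])
    show "cdf ?D = cdf (chi2_distr 1)"
    proof (rule ext)
      fix x show "cdf ?D x = cdf (chi2_distr 1) x"
        unfolding cdf_def measure_def chi1_Iic by (rule refl)
    qed
  qed
qed

lemma prob_chi1: "prob_space (chi2_distr 1)"
proof -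
  interpret N: prob_space N01 by (rule prob_N01)
  have "prob_space (distr N01 borel (\<lambda>w. w\<^sup>2))" by (rule N.prob_space_distr) simp
  then show ?thesis by (simp only: chi1_distr)
qed

lemma chi1_integral:
  assumes [measurable]: "g \<in> borel_measurable borel"
  shows "(\<integral>\<^sup>+w. ennreal (std_normal_density w) * g (w\<^sup>2) \<partial>lborel) = (\<integral>\<^sup>+y. ennreal (chi2_density 1 y) * g y \<partial>lborel)"
proof -
  have "(\<integral>\<^sup>+w. ennreal (std_normal_density w) * g (w\<^sup>2) \<partial>lborel) = (\<integral>\<^sup>+w. g (w\<^sup>2) \<partial>N01)"
    by (simp add: nn_integral_density)
  also have "\<dots> = (\<integral>\<^sup>+y. g y \<partial>distr N01 borel (\<lambda>w. w\<^sup>2))"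
    by (simp add: nn_integral_distr)
  also have "\<dots> = (\<integral>\<^sup>+y. g y \<partial>chi2_distr 1)" by (simp add: chi1_distr)
  also have "\<dots> = (\<integral>\<^sup>+y. ennreal (chi2_density 1 y) * g y \<partial>lborel)"
    unfolding chi2_distr_def by (simp add: nn_integral_density)
  finally show ?thesis .
qed

lemma aux_r:
  fixes m S a b :: real
  assumes "m > 0" "S > 0"
  shows "- a / (2 * (S / (m + 1))) + - b / (2 * (S * (m + 1) / m)) = - ((m + 1) * a + m * b / (m + 1)) / (2 * S)"
proof -
  have nz: "m + 1 \<noteq> 0" "S \<noteq> 0" "m \<noteq> 0" using assms by auto
  have 1: "- a / (2 * (S / (m + 1))) = - ((m+1)*a) / (2*S)" using nz by (simp add: field_simps)
  have 2: "- b / (2 * (S * (m + 1) / m)) = - (m*b/(m+1)) / (2*S)" using nz by (simp add: field_simps)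
  show ?thesis by (simp only: 1 2) (simp add: diff_divide_distrib)
qed

lemma dens_identity:
  fixes m \<sigma> \<nu> u v :: real
  assumes m: "m > 0" and s: "\<sigma> > 0"
  shows "normal_density \<nu> (\<sigma> / sqrt m) (u - v / (m + 1)) * normal_density \<nu> \<sigma> (u + m * v / (m + 1))
       = normal_density \<nu> (\<sigma> / sqrt (m + 1)) u * normal_density 0 (\<sigma> * sqrt ((m + 1) / m)) v"
proof -
  have sq1: "(\<sigma> / sqrt m)\<^sup>2 = \<sigma>\<^sup>2 / m" using m by (simp add: power_divide)
  have sq2: "(\<sigma> / sqrt (m + 1))\<^sup>2 = \<sigma>\<^sup>2 / (m + 1)" using m by (simp add: power_divide)
  have sq3: "(\<sigma> * sqrt ((m + 1) / m))\<^sup>2 = \<sigma>\<^sup>2 * (m + 1) / m" using m by (simp add: power_mult_distrib)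
  have pre: "1 / sqrt (2 * pi * (\<sigma>\<^sup>2 / m)) * (1 / sqrt (2 * pi * \<sigma>\<^sup>2))
      = 1 / sqrt (2 * pi * (\<sigma>\<^sup>2 / (m + 1))) * (1 / sqrt (2 * pi * (\<sigma>\<^sup>2 * (m + 1) / m)))"
  proof -
    have "(2 * pi * (\<sigma>\<^sup>2 / m)) * (2 * pi * \<sigma>\<^sup>2) = (2 * pi * (\<sigma>\<^sup>2 / (m + 1))) * (2 * pi * (\<sigma>\<^sup>2 * (m + 1) / m))"
    proof -
      have "m + m * m > 0" using m by (simp add: add_pos_pos)
      then show ?thesis using m by (simp add: field_simps)
    qed
    then show ?thesis by (simp add: real_sqrt_mult[symmetric])
  qed
  have ex: "- (u - v / (m + 1) - \<nu>)\<^sup>2 / (2 * (\<sigma>\<^sup>2 / m)) + - (u + m * v / (m + 1) - \<nu>)\<^sup>2 / (2 * \<sigma>\<^sup>2)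
      = - (u - \<nu>)\<^sup>2 / (2 * (\<sigma>\<^sup>2 / (m + 1))) + - (v - 0)\<^sup>2 / (2 * (\<sigma>\<^sup>2 * (m + 1) / m))"
  proof -
    define p where "p = v / (m + 1)"
    have e1: "u - v / (m + 1) - \<nu> = (u - \<nu>) - p" by (simp add: p_def)
    have e2: "u + m * v / (m + 1) - \<nu> = (u - \<nu>) + m * p" by (simp add: p_def)
    have v: "v = (m + 1) * p" using m by (simp add: p_def)
    have key: "m * (u - v / (m + 1) - \<nu>)\<^sup>2 + (u + m * v / (m + 1) - \<nu>)\<^sup>2
        = (m + 1) * (u - \<nu>)\<^sup>2 + m * v\<^sup>2 / (m + 1)"
    proof -
      have "m * v\<^sup>2 / (m + 1) = m * (m + 1) * p\<^sup>2"
        using m unfolding v by (simp add: power2_eq_square field_simps)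
      then show ?thesis unfolding e1 e2 by (simp add: power2_eq_square algebra_simps)
    qed
    have l: "- (u - v / (m + 1) - \<nu>)\<^sup>2 / (2 * (\<sigma>\<^sup>2 / m)) + - (u + m * v / (m + 1) - \<nu>)\<^sup>2 / (2 * \<sigma>\<^sup>2)
       = - (m * (u - v / (m + 1) - \<nu>)\<^sup>2 + (u + m * v / (m + 1) - \<nu>)\<^sup>2) / (2 * \<sigma>\<^sup>2)"
      using m s by (simp add: field_simps)
    have r: "- (u - \<nu>)\<^sup>2 / (2 * (\<sigma>\<^sup>2 / (m + 1))) + - (v - 0)\<^sup>2 / (2 * (\<sigma>\<^sup>2 * (m + 1) / m))
       = - ((m + 1) * (u - \<nu>)\<^sup>2 + m * v\<^sup>2 / (m + 1)) / (2 * \<sigma>\<^sup>2)"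
      using m s by (subst aux_r) auto
    show ?thesis unfolding l r key ..
  qed
  show ?thesis
    unfolding normal_density_def sq1 sq2 sq3
    using pre ex
    by (smt (verit) exp_add mult.assoc mult.commute)
qed

lemma decor:
  fixes h :: "real \<Rightarrow> real \<Rightarrow> ennreal" and m \<sigma> \<nu> :: real
  assumes m: "m > 0" and s: "\<sigma> > 0" and h[measurable]: "case_prod h \<in> borel_measurable (borel \<Otimes>\<^sub>M borel)"
  shows "(\<integral>\<^sup>+a. ennreal (normal_density \<nu> (\<sigma> / sqrt m) a) *
            (\<integral>\<^sup>+b. ennreal (normal_density \<nu> \<sigma> b) * h ((m * a + b) / (m + 1)) ((b - a) * (sqrt (m / (m + 1)) / \<sigma>)) \<partial>lborel) \<partial>lborel)
       = (\<integral>\<^sup>+u. ennreal (normal_density \<nu> (\<sigma> / sqrt (m + 1)) u) *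
            (\<integral>\<^sup>+w. ennreal (std_normal_density w) * h u w \<partial>lborel) \<partial>lborel)"
proof -
  define \<kappa> where "\<kappa> = sqrt (m / (m + 1)) / \<sigma>"
  define lm where "lm = \<sigma> * sqrt ((m + 1) / m)"
  have lam: "lm > 0" using m s by (simp add: lm_def)
  have lk: "lm * \<kappa> = 1" using m s
    by (simp add: lm_def \<kappa>_def real_sqrt_mult[symmetric])
  let ?A = "\<lambda>a. ennreal (normal_density \<nu> (\<sigma> / sqrt m) a)"
  let ?B = "\<lambda>b. ennreal (normal_density \<nu> \<sigma> b)"
  let ?U = "\<lambda>u. ennreal (normal_density \<nu> (\<sigma> / sqrt (m + 1)) u)"
  let ?V = "\<lambda>v. ennreal (normal_density 0 lm v)"
  have "(\<integral>\<^sup>+a. ?A a * (\<integral>\<^sup>+b. ?B b * h ((m * a + b) / (m + 1)) ((b - a) * \<kappa>) \<partial>lborel) \<partial>lborel)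
      = (\<integral>\<^sup>+a. ?A a * (\<integral>\<^sup>+v. ?B (a + 1 * v) * h ((m * a + (a + 1 * v)) / (m + 1)) ((a + 1 * v - a) * \<kappa>) \<partial>lborel) \<partial>lborel)"
  proof (rule nn_integral_cong)
    fix a :: real
    show "?A a * (\<integral>\<^sup>+b. ?B b * h ((m * a + b) / (m + 1)) ((b - a) * \<kappa>) \<partial>lborel)
      = ?A a * (\<integral>\<^sup>+v. ?B (a + 1 * v) * h ((m * a + (a + 1 * v)) / (m + 1)) ((a + 1 * v - a) * \<kappa>) \<partial>lborel)"
      by (subst nn_integral_real_affine[where c = 1 and t = a]) auto
  qed
  also have "\<dots> = (\<integral>\<^sup>+a. (\<integral>\<^sup>+v. ?A a * ?B (a + v) * h (a + v / (m + 1)) (v * \<kappa>) \<partial>lborel) \<partial>lborel)"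
  proof (intro nn_integral_cong)
    fix a :: real
    have eq: "(m * a + (a + 1 * v)) / (m + 1) = a + v / (m + 1)" for v
      using m by (simp add: field_simps)
    show "?A a * (\<integral>\<^sup>+v. ?B (a + 1 * v) * h ((m * a + (a + 1 * v)) / (m + 1)) ((a + 1 * v - a) * \<kappa>) \<partial>lborel)
      = (\<integral>\<^sup>+v. ?A a * ?B (a + v) * h (a + v / (m + 1)) (v * \<kappa>) \<partial>lborel)"
      unfolding eq by (subst nn_integral_cmult[symmetric]) (auto simp: mult.assoc)
  qed
  also have "\<dots> = (\<integral>\<^sup>+v. (\<integral>\<^sup>+a. ?A a * ?B (a + v) * h (a + v / (m + 1)) (v * \<kappa>) \<partial>lborel) \<partial>lborel)"
    by (rule lborel_pair.Fubini'[symmetric]) measurable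
  also have "\<dots> = (\<integral>\<^sup>+v. (\<integral>\<^sup>+u. ?A (- v / (m + 1) + 1 * u) * ?B (- v / (m + 1) + 1 * u + v)
        * h (- v / (m + 1) + 1 * u + v / (m + 1)) (v * \<kappa>) \<partial>lborel) \<partial>lborel)"
  proof (rule nn_integral_cong)
    fix v :: real
    show "(\<integral>\<^sup>+a. ?A a * ?B (a + v) * h (a + v / (m + 1)) (v * \<kappa>) \<partial>lborel) = (\<integral>\<^sup>+u. ?A (- v / (m + 1) + 1 * u) * ?B (- v / (m + 1) + 1 * u + v)
        * h (- v / (m + 1) + 1 * u + v / (m + 1)) (v * \<kappa>) \<partial>lborel)"
      by (subst nn_integral_real_affine[where c = 1 and t = "- v / (m + 1)"]) auto
  qed
  also have "\<dots> = (\<integral>\<^sup>+v. (\<integral>\<^sup>+u. ?U u * ?V v * h u (v * \<kappa>) \<partial>lborel) \<partial>lborel)"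
  proof (intro nn_integral_cong)
    fix u v :: real
    have e1: "- v / (m + 1) + 1 * u = u - v / (m + 1)" by simp
    have e2: "- v / (m + 1) + 1 * u + v = u + m * v / (m + 1)" using m by (simp add: field_simps)
    have e3: "- v / (m + 1) + 1 * u + v / (m + 1) = u" by simp
    have "?A (u - v / (m + 1)) * ?B (u + m * v / (m + 1)) = ?U u * ?V v"
      using dens_identity[OF m s, of \<nu> u v]
      by (simp add: ennreal_mult'[symmetric] lm_def)
    then show "?A (- v / (m + 1) + 1 * u) * ?B (- v / (m + 1) + 1 * u + v) * h (- v / (m + 1) + 1 * u + v / (m + 1)) (v * \<kappa>)
      = ?U u * ?V v * h u (v * \<kappa>)"
      unfolding e3 unfolding e2 unfolding e1 by simp
  qed
  also have "\<dots> = (\<integral>\<^sup>+u. (\<integral>\<^sup>+v. ?U u * ?V v * h u (v * \<kappa>) \<partial>lborel) \<partial>lborel)"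
    by (rule lborel_pair.Fubini') measurable
  also have "\<dots> = (\<integral>\<^sup>+u. ?U u * (\<integral>\<^sup>+w. ennreal (std_normal_density w) * h u w \<partial>lborel) \<partial>lborel)"
  proof (intro nn_integral_cong)
    fix u :: real
    have "(\<integral>\<^sup>+v. ?V v * h u (v * \<kappa>) \<partial>lborel) = ennreal lm * (\<integral>\<^sup>+w. ?V (0 + lm * w) * h u ((0 + lm * w) * \<kappa>) \<partial>lborel)"
      using lam by (subst nn_integral_real_affine[where c = lm and t = 0]) auto
    also have "\<dots> = (\<integral>\<^sup>+w. ennreal (std_normal_density w) * h u w \<partial>lborel)"
    proof (subst nn_integral_cmult[symmetric])
      show "(\<integral>\<^sup>+w. ennreal lm * (?V (0 + lm * w) * h u ((0 + lm * w) * \<kappa>)) \<partial>lborel)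
          = (\<integral>\<^sup>+w. ennreal (std_normal_density w) * h u w \<partial>lborel)"
      proof (intro nn_integral_cong)
        fix w :: real
        have "lm * normal_density 0 lm (lm * w) = std_normal_density w"
          using lam by (simp add: normal_density_def real_sqrt_mult power_mult_distrib field_simps)
        moreover have e: "(0 + lm * w) * \<kappa> = w"
        proof -
          have "(0 + lm * w) * \<kappa> = (lm * \<kappa>) * w" by (simp add: mult_ac)
          then show ?thesis using lk by simp
        qed
        ultimately show "ennreal lm * (?V (0 + lm * w) * h u ((0 + lm * w) * \<kappa>)) = ennreal (std_normal_density w) * h u w"
          unfolding e using lam by (simp add: ennreal_mult'[symmetric] mult.assoc[symmetric])
      qed
    qed measurable
    finally have Q: "(\<integral>\<^sup>+v. ?V v * h u (v * \<kappa>) \<partial>lborel) = (\<integral>\<^sup>+w. ennreal (std_normal_density w) * h u w \<partial>lborel)" .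
    have "(\<integral>\<^sup>+v. ?U u * ?V v * h u (v * \<kappa>) \<partial>lborel) = ?U u * (\<integral>\<^sup>+v. ?V v * h u (v * \<kappa>) \<partial>lborel)"
      by (subst nn_integral_cmult[symmetric]) (auto simp: mult.assoc)
    then show "(\<integral>\<^sup>+v. ?U u * ?V v * h u (v * \<kappa>) \<partial>lborel) = ?U u * (\<integral>\<^sup>+w. ennreal (std_normal_density w) * h u w \<partial>lborel)"
      by (simp only: Q)
  qed
  finally show ?thesis unfolding \<kappa>_def .
qed

definition Qint :: "nat \<Rightarrow> (real \<Rightarrow> ennreal) \<Rightarrow> ennreal" where
  "Qint k g = (if k = 0 then g 0 else \<integral>\<^sup>+t. ennreal (chi2_density k t) * g t \<partial>lborel)"

lemma Qint_cmult:
  assumes [measurable]: "g \<in> borel_measurable borel"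
  shows "Qint k (\<lambda>s. c * g s) = c * Qint k g"
  unfolding Qint_def
  by (auto simp: nn_integral_cmult[symmetric] mult_ac intro!: nn_integral_cong)

lemma Qint_swap:
  assumes [measurable]: "case_prod F \<in> borel_measurable (borel \<Otimes>\<^sub>M borel)"
  shows "Qint k (\<lambda>s. \<integral>\<^sup>+a. F a s \<partial>lborel) = (\<integral>\<^sup>+a. Qint k (\<lambda>s. F a s) \<partial>lborel)"
proof (cases "k = 0")
  case True then show ?thesis by (simp add: Qint_def)
next
  case False
  have "Qint k (\<lambda>s. \<integral>\<^sup>+a. F a s \<partial>lborel) = (\<integral>\<^sup>+s. (\<integral>\<^sup>+a. ennreal (chi2_density k s) * F a s \<partial>lborel) \<partial>lborel)"
    using False unfolding Qint_def
    by (auto intro!: nn_integral_cong simp: nn_integral_cmult[symmetric])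
  also have "\<dots> = (\<integral>\<^sup>+a. (\<integral>\<^sup>+s. ennreal (chi2_density k s) * F a s \<partial>lborel) \<partial>lborel)"
    by (rule lborel_pair.Fubini') measurable
  also have "\<dots> = (\<integral>\<^sup>+a. Qint k (\<lambda>s. F a s) \<partial>lborel)"
    using False unfolding Qint_def by simp
  finally show ?thesis .
qed

lemma conv_Qint:
  assumes g[measurable]: "g \<in> borel_measurable borel"
  shows "Qint k (\<lambda>s. \<integral>\<^sup>+w. ennreal (std_normal_density w) * g (s + w\<^sup>2) \<partial>lborel) = Qint (Suc k) g"
proof (cases "k = 0")
  case True
  then show ?thesis using chi1_integral[OF g] by (simp add: Qint_def)
next
  case False
  then have k: "k \<ge> 1" by simp
  have "Qint k (\<lambda>s. \<integral>\<^sup>+w. ennreal (std_normal_density w) * g (s + w\<^sup>2) \<partial>lborel)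
      = (\<integral>\<^sup>+s. ennreal (chi2_density k s) * (\<integral>\<^sup>+y. ennreal (chi2_density 1 y) * g (s + y) \<partial>lborel) \<partial>lborel)"
    using False unfolding Qint_def
    by (auto intro!: nn_integral_cong simp: chi1_integral[where g = "\<lambda>y. g (_ + y)"])
  also have "\<dots> = (\<integral>\<^sup>+s. (\<integral>\<^sup>+x. ennreal (chi2_density k s) * ennreal (chi2_density 1 (x - s)) * g x \<partial>lborel) \<partial>lborel)"
  proof (rule nn_integral_cong)
    fix s :: real
    have "(\<integral>\<^sup>+y. ennreal (chi2_density 1 y) * g (s + y) \<partial>lborel)
        = (\<integral>\<^sup>+x. ennreal (chi2_density 1 (- s + 1 * x)) * g (s + (- s + 1 * x)) \<partial>lborel)"
      by (subst nn_integral_real_affine[where c = 1 and t = "- s"]) auto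
    also have "\<dots> = (\<integral>\<^sup>+x. ennreal (chi2_density 1 (x - s)) * g x \<partial>lborel)"
      by simp
    finally show "ennreal (chi2_density k s) * (\<integral>\<^sup>+y. ennreal (chi2_density 1 y) * g (s + y) \<partial>lborel)
      = (\<integral>\<^sup>+x. ennreal (chi2_density k s) * ennreal (chi2_density 1 (x - s)) * g x \<partial>lborel)"
      by (simp add: nn_integral_cmult[symmetric] mult.assoc)
  qed
  also have "\<dots> = (\<integral>\<^sup>+x. (\<integral>\<^sup>+s. ennreal (chi2_density k s) * ennreal (chi2_density 1 (x - s)) * g x \<partial>lborel) \<partial>lborel)"
    by (rule lborel_pair.Fubini') measurable
  also have "\<dots> = (\<integral>\<^sup>+x. ennreal (chi2_density (Suc k) x) * g x \<partial>lborel)"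
  proof (rule nn_integral_cong)
    fix x :: real
    show "(\<integral>\<^sup>+s. ennreal (chi2_density k s) * ennreal (chi2_density 1 (x - s)) * g x \<partial>lborel)
      = ennreal (chi2_density (Suc k) x) * g x"
      using conv_point[OF k, of x, unfolded One_nat_def] by (simp add: nn_integral_multc)
  qed
  also have "\<dots> = Qint (Suc k) g" by (simp add: Qint_def)
  finally show ?thesis .
qed

definition mn :: "nat \<Rightarrow> (nat \<Rightarrow> real) \<Rightarrow> real" where
  "mn n x = (\<Sum>j=1..n. x j) / real n"

definition Sn :: "nat \<Rightarrow> (nat \<Rightarrow> real) \<Rightarrow> real" where
  "Sn n x = (\<Sum>k=1..n. (x k - mn n x)\<^sup>2)"

lemma Sn_alt:
  assumes n: "n \<ge> 1"
  shows "Sn n x = (\<Sum>j=1..n. (x j)\<^sup>2) - (\<Sum>j=1..n. x j)\<^sup>2 / real n"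
proof -
  define m where "m = mn n x"
  define A where "A = (\<Sum>j=1..n. x j)"
  have Am: "A = real n * m" using n by (simp add: m_def mn_def A_def)
  have "Sn n x = (\<Sum>k=1..n. (x k)\<^sup>2 - 2 * m * x k + m\<^sup>2)"
    unfolding Sn_def m_def[symmetric] by (intro sum.cong) (auto simp: power2_diff)
  also have "\<dots> = (\<Sum>k=1..n. (x k)\<^sup>2) - 2 * m * A + real n * m\<^sup>2"
    by (simp add: sum.distrib sum_subtractf sum_distrib_left A_def)
  also have "\<dots> = (\<Sum>k=1..n. (x k)\<^sup>2) - A\<^sup>2 / real n"
    using n unfolding Am by (simp add: power2_eq_square field_simps)
  finally show ?thesis unfolding A_def .
qed

lemma upd_sum: "(\<Sum>j=1..n. f ((x(Suc n := b)) j)) = (\<Sum>j=1..n. f (x j))"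
  by (intro sum.cong) auto

lemma mn_Suc:
  assumes n: "n \<ge> 1"
  shows "mn (Suc n) (x(Suc n := b)) = (real n * mn n x + b) / (real n + 1)"
proof -
  have "(\<Sum>j=1..Suc n. (x(Suc n := b)) j) = (\<Sum>j=1..n. x j) + b"
    using upd_sum[of "\<lambda>y. y" x n b] by simp
  then show ?thesis using n by (simp add: mn_def add_ac)
qed

lemma alg_Sn:
  fixes A Q y n :: real
  assumes "n > 0"
  shows "(Q + y\<^sup>2) - (A + y)\<^sup>2 / (n + 1) = (Q - A\<^sup>2 / n) + n / (n + 1) * (y - A / n)\<^sup>2"
proof -
  have n1: "n + 1 > 0" using assms by auto
  have n2: "n + n * n > 0" "n * n + n * (n * n) > 0" using assms by (simp_all add: add_pos_pos)
  have e: "n / (n + 1) * (y - A / n)\<^sup>2 = (n * y - A)\<^sup>2 / (n * (n + 1))"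
  proof -
    have "y - A / n = (n * y - A) / n" using assms by (simp add: field_simps)
    then show ?thesis using assms n1 n2 by (simp add: power_divide power2_eq_square field_simps)
  qed
  have l: "(Q + y\<^sup>2) - (A + y)\<^sup>2 / (n + 1) = (n * (n + 1) * Q + n * (n + 1) * y\<^sup>2 - n * (A + y)\<^sup>2) / (n * (n + 1))"
    using assms n1 n2 by (simp add: field_simps)
  have r: "(Q - A\<^sup>2 / n) + (n * y - A)\<^sup>2 / (n * (n + 1)) = (n * (n + 1) * Q - (n + 1) * A\<^sup>2 + (n * y - A)\<^sup>2) / (n * (n + 1))"
    using assms n1 n2 by (simp add: field_simps)
  have "n * (n + 1) * Q + n * (n + 1) * y\<^sup>2 - n * (A + y)\<^sup>2 = n * (n + 1) * Q - (n + 1) * A\<^sup>2 + (n * y - A)\<^sup>2"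
    by (simp add: power2_eq_square algebra_simps)
  then show ?thesis unfolding e l r by simp
qed

lemma Sn_Suc:
  assumes n: "n \<ge> 1"
  shows "Sn (Suc n) (x(Suc n := b)) = Sn n x + real n / (real n + 1) * (b - mn n x)\<^sup>2"
proof -
  have s1: "(\<Sum>j=1..Suc n. (x(Suc n := b)) j) = (\<Sum>j=1..n. x j) + b"
    using upd_sum[of "\<lambda>y. y" x n b] by simp
  have s2: "(\<Sum>j=1..Suc n. ((x(Suc n := b)) j)\<^sup>2) = (\<Sum>j=1..n. (x j)\<^sup>2) + b\<^sup>2"
    using upd_sum[of "\<lambda>y. y\<^sup>2" x n b] by simp
  have "Sn (Suc n) (x(Suc n := b)) = ((\<Sum>j=1..n. (x j)\<^sup>2) + b\<^sup>2) - ((\<Sum>j=1..n. x j) + b)\<^sup>2 / (real n + 1)"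
    by (subst Sn_alt) (simp_all add: s1 s2 add_ac)
  also have "\<dots> = ((\<Sum>j=1..n. (x j)\<^sup>2) - (\<Sum>j=1..n. x j)\<^sup>2 / real n) + real n / (real n + 1) * (b - (\<Sum>j=1..n. x j) / real n)\<^sup>2"
    using n by (intro alg_Sn) simp
  also have "\<dots> = Sn n x + real n / (real n + 1) * (b - mn n x)\<^sup>2"
    using n by (simp add: Sn_alt mn_def)
  finally show ?thesis .
qed

abbreviation Nd :: "real \<Rightarrow> real \<Rightarrow> real measure" where
  "Nd \<nu> \<sigma> \<equiv> density lborel (\<lambda>x. ennreal (normal_density \<nu> \<sigma> x))"

lemma psf_Nd: "\<sigma> > 0 \<Longrightarrow> product_sigma_finite (\<lambda>_. Nd \<nu> \<sigma>)"
  unfolding product_sigma_finite_def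
  using prob_space_normal_density[of \<sigma> \<nu>] prob_space_imp_sigma_finite by blast

lemma comp_meas: "j \<in> I \<Longrightarrow> (\<lambda>x. x j) \<in> borel_measurable (PiM I (\<lambda>_. Nd \<nu> \<sigma>))"
  using measurable_component_singleton[of j I "\<lambda>_. Nd \<nu> \<sigma>"]
  by (simp add: measurable_cong_sets[OF refl sets_density])

lemma mn_meas[measurable]: "mn n \<in> borel_measurable (PiM {1..n} (\<lambda>_. Nd \<nu> \<sigma>))"
  unfolding mn_def[abs_def]
  by (intro borel_measurable_divide borel_measurable_sum comp_meas) auto

lemma Sn_meas[measurable]: "Sn n \<in> borel_measurable (PiM {1..n} (\<lambda>_. Nd \<nu> \<sigma>))"
  unfolding Sn_def[abs_def]
  by (intro borel_measurable_power borel_measurable_diff borel_measurable_sum comp_meas mn_meas) auto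

lemma sq_scale: "c \<ge> 0 \<Longrightarrow> \<sigma> > 0 \<Longrightarrow> (S + c * d\<^sup>2) / \<sigma>\<^sup>2 = S / \<sigma>\<^sup>2 + (d * (sqrt c / \<sigma>))\<^sup>2"
  by (simp add: power_mult_distrib power_divide add_divide_distrib mult.commute)

lemma induct_main:
  assumes s: "\<sigma> > 0" and n: "n \<ge> 1"
  shows "\<forall>H. case_prod H \<in> borel_measurable (borel \<Otimes>\<^sub>M borel) \<longrightarrow>
    (\<integral>\<^sup>+x. H (mn n x) (Sn n x / \<sigma>\<^sup>2) \<partial>PiM {1..n} (\<lambda>_. Nd \<nu> \<sigma>))
     = (\<integral>\<^sup>+u. ennreal (normal_density \<nu> (\<sigma> / sqrt (real n)) u) * Qint (n - 1) (H u) \<partial>lborel)"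
  using n
proof (induction n rule: nat_induct_at_least)
  case base
  interpret PS: product_sigma_finite "\<lambda>_. Nd \<nu> \<sigma>" by (rule psf_Nd[OF s])
  show ?case
  proof (intro allI impI)
    fix H :: "real \<Rightarrow> real \<Rightarrow> ennreal"
    assume [measurable]: "case_prod H \<in> borel_measurable (borel \<Otimes>\<^sub>M borel)"
    have "(\<integral>\<^sup>+x. H (mn 1 x) (Sn 1 x / \<sigma>\<^sup>2) \<partial>PiM {1..1} (\<lambda>_. Nd \<nu> \<sigma>))
        = (\<integral>\<^sup>+x. H (x 1) 0 \<partial>PiM {1::nat} (\<lambda>_. Nd \<nu> \<sigma>))"
      by (simp add: mn_def Sn_def One_nat_def)
    also have "\<dots> = (\<integral>\<^sup>+a. H a 0 \<partial>Nd \<nu> \<sigma>)"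
      by (rule PS.product_nn_integral_singleton) measurable
    also have "\<dots> = (\<integral>\<^sup>+a. ennreal (normal_density \<nu> \<sigma> a) * H a 0 \<partial>lborel)"
      by (simp add: nn_integral_density)
    finally show "(\<integral>\<^sup>+x. H (mn 1 x) (Sn 1 x / \<sigma>\<^sup>2) \<partial>PiM {1..1} (\<lambda>_. Nd \<nu> \<sigma>))
     = (\<integral>\<^sup>+u. ennreal (normal_density \<nu> (\<sigma> / sqrt (real 1)) u) * Qint (1 - 1) (H u) \<partial>lborel)"
      by (simp add: Qint_def)
  qed
next
  case (Suc n)
  interpret PS: product_sigma_finite "\<lambda>_. Nd \<nu> \<sigma>" by (rule psf_Nd[OF s])
  have n1: "n \<ge> 1" by fact
  have rn: "real n > 0" using n1 by simp
  define c where "c = sqrt (real n / (real n + 1)) / \<sigma>"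
  show ?case
  proof (intro allI impI)
    fix H :: "real \<Rightarrow> real \<Rightarrow> ennreal"
    assume H[measurable]: "case_prod H \<in> borel_measurable (borel \<Otimes>\<^sub>M borel)"
    define G where "G a s = (\<integral>\<^sup>+b. ennreal (normal_density \<nu> \<sigma> b) *
        H ((real n * a + b) / (real n + 1)) (s + ((b - a) * c)\<^sup>2) \<partial>lborel)" for a s
    have G[measurable]: "case_prod G \<in> borel_measurable (borel \<Otimes>\<^sub>M borel)"
      unfolding G_def[abs_def] by measurable
    have ins: "insert (Suc n) {1..n} = {1..Suc n}" by auto
    have "(\<integral>\<^sup>+x. H (mn (Suc n) x) (Sn (Suc n) x / \<sigma>\<^sup>2) \<partial>PiM {1..Suc n} (\<lambda>_. Nd \<nu> \<sigma>))
        = (\<integral>\<^sup>+x. (\<integral>\<^sup>+y. H (mn (Suc n) (x(Suc n := y))) (Sn (Suc n) (x(Suc n := y)) / \<sigma>\<^sup>2) \<partial>Nd \<nu> \<sigma>) \<partial>PiM {1..n} (\<lambda>_. Nd \<nu> \<sigma>))"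
    proof -
      have m: "(\<lambda>x. H (mn (Suc n) x) (Sn (Suc n) x / \<sigma>\<^sup>2)) \<in> borel_measurable (PiM {1..Suc n} (\<lambda>_. Nd \<nu> \<sigma>))"
        by measurable
      show ?thesis
        unfolding ins[symmetric]
        by (rule PS.product_nn_integral_insert) (auto simp only: m[folded ins] finite_atLeastAtMost atLeastAtMost_iff)
    qed
    also have "\<dots> = (\<integral>\<^sup>+x. G (mn n x) (Sn n x / \<sigma>\<^sup>2) \<partial>PiM {1..n} (\<lambda>_. Nd \<nu> \<sigma>))"
    proof (rule nn_integral_cong)
      fix x :: "nat \<Rightarrow> real"
      have "H (mn (Suc n) (x(Suc n := y))) (Sn (Suc n) (x(Suc n := y)) / \<sigma>\<^sup>2)
          = H ((real n * mn n x + y) / (real n + 1)) (Sn n x / \<sigma>\<^sup>2 + ((y - mn n x) * c)\<^sup>2)" for y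
        using s unfolding mn_Suc[OF n1] Sn_Suc[OF n1] c_def
        by (subst sq_scale) auto
      then show "(\<integral>\<^sup>+y. H (mn (Suc n) (x(Suc n := y))) (Sn (Suc n) (x(Suc n := y)) / \<sigma>\<^sup>2) \<partial>Nd \<nu> \<sigma>)
          = G (mn n x) (Sn n x / \<sigma>\<^sup>2)"
        unfolding G_def by (simp add: nn_integral_density)
    qed
    also have "\<dots> = (\<integral>\<^sup>+a. ennreal (normal_density \<nu> (\<sigma> / sqrt (real n)) a) * Qint (n - 1) (G a) \<partial>lborel)"
      using Suc.IH G by blast
    also have "\<dots> = (\<integral>\<^sup>+a. Qint (n - 1) (\<lambda>s. ennreal (normal_density \<nu> (\<sigma> / sqrt (real n)) a) * G a s) \<partial>lborel)"
      by (subst Qint_cmult) simp_all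
    also have "\<dots> = Qint (n - 1) (\<lambda>s. \<integral>\<^sup>+a. ennreal (normal_density \<nu> (\<sigma> / sqrt (real n)) a) * G a s \<partial>lborel)"
      by (rule Qint_swap[symmetric]) measurable
    also have "\<dots> = Qint (n - 1) (\<lambda>s. \<integral>\<^sup>+u. ennreal (normal_density \<nu> (\<sigma> / sqrt (real n + 1)) u) *
          (\<integral>\<^sup>+w. ennreal (std_normal_density w) * H u (s + w\<^sup>2) \<partial>lborel) \<partial>lborel)"
    proof -
      have "(\<integral>\<^sup>+a. ennreal (normal_density \<nu> (\<sigma> / sqrt (real n)) a) * G a s \<partial>lborel)
         = (\<integral>\<^sup>+u. ennreal (normal_density \<nu> (\<sigma> / sqrt (real n + 1)) u) *
          (\<integral>\<^sup>+w. ennreal (std_normal_density w) * H u (s + w\<^sup>2) \<partial>lborel) \<partial>lborel)" for s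
        unfolding G_def c_def
        by (rule decor[OF rn s, where h = "\<lambda>u w. H u (s + w\<^sup>2)"]) measurable
      then show ?thesis by simp
    qed
    also have "\<dots> = (\<integral>\<^sup>+u. Qint (n - 1) (\<lambda>s. ennreal (normal_density \<nu> (\<sigma> / sqrt (real n + 1)) u) *
          (\<integral>\<^sup>+w. ennreal (std_normal_density w) * H u (s + w\<^sup>2) \<partial>lborel)) \<partial>lborel)"
      by (rule Qint_swap) measurable
    also have "\<dots> = (\<integral>\<^sup>+u. ennreal (normal_density \<nu> (\<sigma> / sqrt (real n + 1)) u) *
          Qint (n - 1) (\<lambda>s. \<integral>\<^sup>+w. ennreal (std_normal_density w) * H u (s + w\<^sup>2) \<partial>lborel) \<partial>lborel)"
      by (subst Qint_cmult) simp_all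
    also have "\<dots> = (\<integral>\<^sup>+u. ennreal (normal_density \<nu> (\<sigma> / sqrt (real (Suc n))) u) * Qint (Suc n - 1) (H u) \<partial>lborel)"
    proof -
      have "Qint (n - 1) (\<lambda>s. \<integral>\<^sup>+w. ennreal (std_normal_density w) * H u (s + w\<^sup>2) \<partial>lborel) = Qint (Suc n - 1) (H u)" for u
        using conv_Qint[of "H u" "n - 1"] n1 by simp
      then show ?thesis by (simp add: add.commute)
    qed
    finally show "(\<integral>\<^sup>+x. H (mn (Suc n) x) (Sn (Suc n) x / \<sigma>\<^sup>2) \<partial>PiM {1..Suc n} (\<lambda>_. Nd \<nu> \<sigma>))
     = (\<integral>\<^sup>+u. ennreal (normal_density \<nu> (\<sigma> / sqrt (real (Suc n))) u) * Qint (Suc n - 1) (H u) \<partial>lborel)" .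
  qed
qed

lemma quantile_ex:
  fixes F :: "real \<Rightarrow> real"
  assumes cont: "\<And>x. isCont F x" and lim: "(F \<longlongrightarrow> 1) at_top" and b: "F b < p" and p: "p < 1"
    and strict: "\<And>x y. b \<le> x \<Longrightarrow> x < y \<Longrightarrow> F x < F y"
    and mono: "\<And>x. x \<le> b \<Longrightarrow> F x \<le> F b"
  shows "\<exists>x>b. F x = p \<and> (\<forall>y. F y = p \<longrightarrow> y = x)"
proof -
  have "eventually (\<lambda>x. p < F x) at_top"
    using order_tendstoD(1)[OF lim p] .
  then obtain N where N: "\<And>x. x \<ge> N \<Longrightarrow> p < F x"
    by (auto simp: eventually_at_top_linorder)
  define X where "X = max N b"
  have X: "p < F X" "b \<le> X" using N by (auto simp: X_def)
  obtain x where x: "x \<ge> b" "x \<le> X" "F x = p"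
    using IVT[of F b p X] X b cont by force
  have xb: "x > b" using x b by (cases "x = b") auto
  have uniq: "y = x" if "F y = p" for y
  proof (rule ccontr)
    assume ne: "y \<noteq> x"
    show False
    proof (cases "y \<le> b")
      case True then show False using mono[OF True] b that by simp
    next
      case False
      then show False using ne strict[of y x] strict[of x y] xb that x(3)
        by (cases "y < x") auto
    qed
  qed
  show ?thesis using xb x(3) uniq by blast
qed

lemma emeasure_density_singleton:
  fixes f :: "real \<Rightarrow> ennreal"
  assumes [measurable]: "f \<in> borel_measurable borel"
  shows "emeasure (density lborel f) {x} = 0"
proof -
  have "emeasure (density lborel f) {x} = (\<integral>\<^sup>+y. f y * indicator {x} y \<partial>lborel)"
    by (subst emeasure_density) auto
  also have "\<dots> = (\<integral>\<^sup>+(y::real). 0 \<partial>lborel)"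
    by (intro nn_integral_cong_AE) (use AE_lborel_singleton[of x] in \<open>auto elim!: eventually_mono\<close>)
  finally show ?thesis by simp
qed

lemma prob_chi2: "k \<ge> 1 \<Longrightarrow> prob_space (chi2_distr k)"
proof -
  have Q: "Qint k (\<lambda>_. 1) = 1" for k
  proof (induction k)
    case 0 then show ?case by (simp add: Qint_def)
  next
    case (Suc k)
    have "Qint (Suc k) (\<lambda>_. 1) = Qint k (\<lambda>s. \<integral>\<^sup>+w. ennreal (std_normal_density w) * 1 \<partial>lborel)"
      by (rule conv_Qint[symmetric]) simp
    also have "(\<lambda>s. \<integral>\<^sup>+w. ennreal (std_normal_density w) * 1 \<partial>lborel) = (\<lambda>_. 1)"
      using prob_space.emeasure_space_1[OF prob_N01] by (simp add: emeasure_density)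
    finally show ?case using Suc by simp
  qed
  assume k: "k \<ge> 1"
  show ?thesis
  proof
    show "emeasure (chi2_distr k) (space (chi2_distr k)) = 1"
      using Q[of k] k unfolding chi2_distr_def Qint_def
      by (simp add: emeasure_density)
  qed
qed

lemma density_Ioc_pos:
  fixes f :: "real \<Rightarrow> real"
  assumes [measurable]: "f \<in> borel_measurable borel" and pos: "\<And>t. t \<in> {x<..y} \<Longrightarrow> f t > 0" and xy: "x < y"
  shows "emeasure (density lborel (\<lambda>t. ennreal (f t))) {x<..y} > 0"
proof (rule ccontr)
  assume "\<not> ?thesis"
  then have "emeasure (density lborel (\<lambda>t. ennreal (f t))) {x<..y} = 0" by (simp add: zero_less_iff_neq_zero)
  then have "(\<integral>\<^sup>+t. ennreal (f t) * indicator {x<..y} t \<partial>lborel) = 0"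
    by (subst (asm) emeasure_density) auto
  then have "AE t in lborel. ennreal (f t) * indicator {x<..y} t = 0"
    by (subst (asm) nn_integral_0_iff_AE) auto
  then have "AE t in lborel. t \<notin> {x<..y}"
  proof (rule eventually_mono)
    fix t assume "ennreal (f t) * indicator {x<..y} t = 0"
    then show "t \<notin> {x<..y}" using pos[of t] by (auto simp: indicator_def)
  qed
  then have "emeasure lborel {x<..y} = 0"
    by (subst (asm) AE_iff_measurable[where N = "{x<..y}"]) auto
  then show False using xy by simp
qed

lemma chi2_cdf_props:
  assumes k: "k \<ge> 1"
  shows "real_distribution (chi2_distr k)"
    and "\<And>x. isCont (cdf (chi2_distr k)) x"
    and "cdf (chi2_distr k) 0 = 0"
    and "\<And>x y. 0 \<le> x \<Longrightarrow> x < y \<Longrightarrow> cdf (chi2_distr k) x < cdf (chi2_distr k) y"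
proof -
  interpret P: prob_space "chi2_distr k" by (rule prob_chi2[OF k])
  show RD: "real_distribution (chi2_distr k)"
    by unfold_locales simp
  interpret real_distribution "chi2_distr k" by (rule RD)
  show "isCont (cdf (chi2_distr k)) x" for x
    by (subst isCont_cdf) (simp add: measure_def chi2_distr_def emeasure_density_singleton)
  show "cdf (chi2_distr k) 0 = 0"
  proof -
    have "emeasure (chi2_distr k) {..0} = (\<integral>\<^sup>+y. ennreal (chi2_density k y) * indicator {..0} y \<partial>lborel)"
      unfolding chi2_distr_def by (subst emeasure_density) auto
    also have "\<dots> = 0"
    proof -
      have *: "ennreal (chi2_density k y) * indicator {..0} y = 0" for y
        by (auto simp: chi2_density_def indicator_def)
      show ?thesis by (simp only: *) simp
    qed
    finally show ?thesis by (simp add: cdf_def measure_def)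
  qed
  show "cdf (chi2_distr k) x < cdf (chi2_distr k) y" if "0 \<le> x" "x < y" for x y
  proof -
    have "emeasure (chi2_distr k) {x<..y} > 0"
      unfolding chi2_distr_def using that k
      by (intro density_Ioc_pos) (auto intro!: chi2_density_pos)
    then have "measure (chi2_distr k) {x<..y} > 0"
      by (simp add: P.emeasure_eq_measure)
    then show ?thesis using cdf_diff_eq[OF that(2)] by simp
  qed
qed

lemma chi2_quantile_props:
  assumes k: "k \<ge> 1" and p: "0 < p" "p < 1"
  shows "chi2_quantile k p > 0 \<and> cdf (chi2_distr k) (chi2_quantile k p) = p"
proof -
  interpret real_distribution "chi2_distr k" by (rule chi2_cdf_props(1)[OF k])
  have "\<exists>x>0. cdf (chi2_distr k) x = p \<and> (\<forall>y. cdf (chi2_distr k) y = p \<longrightarrow> y = x)"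
  proof (rule quantile_ex)
    show "cdf (chi2_distr k) 0 < p" using chi2_cdf_props(3)[OF k] p by simp
  qed (use p chi2_cdf_props(2,4)[OF k] cdf_lim_at_top_prob cdf_nondecreasing in auto)
  then have "\<exists>!x. x > 0 \<and> cdf (chi2_distr k) x = p" by blast
  from theI'[OF this] show ?thesis unfolding chi2_quantile_def .
qed

lemma N01_cdf_props:
  shows "real_distribution N01"
    and "\<And>x. isCont (cdf N01) x"
    and "cdf N01 0 = 1/2"
    and "\<And>x y. x < y \<Longrightarrow> cdf N01 x < cdf N01 y"
proof -
  interpret P: prob_space N01 by (rule prob_N01)
  show RD: "real_distribution N01"
    by unfold_locales simp
  interpret real_distribution N01 by (rule RD)
  show "isCont (cdf N01) x" for x
    by (subst isCont_cdf) (simp add: measure_def emeasure_density_singleton)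
  show "cdf N01 x < cdf N01 y" if "x < y" for x y
  proof -
    have "emeasure N01 {x<..y} > 0"
      using that by (intro density_Ioc_pos) (auto intro!: normal_density_pos)
    then have "measure N01 {x<..y} > 0"
      by (simp add: P.emeasure_eq_measure)
    then show ?thesis using cdf_diff_eq[OF that] by simp
  qed
  show "cdf N01 0 = 1/2"
  proof -
    have "emeasure N01 {..0} = (\<integral>\<^sup>+t. ennreal (std_normal_density t) * indicator {..0} t \<partial>lborel)"
      by (subst emeasure_density) auto
    also have "\<dots> = (\<integral>\<^sup>+t. ennreal (std_normal_density (0 + (-1) * t)) * indicator {..0} (0 + (-1) * t) \<partial>lborel)"
      by (subst nn_integral_real_affine[where c = "-1" and t = 0]) auto
    also have "\<dots> = (\<integral>\<^sup>+t. ennreal (std_normal_density t) * indicator {0..} t \<partial>lborel)"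
      by (intro nn_integral_cong) (auto simp: std_normal_density_def indicator_def)
    also have "\<dots> = emeasure N01 {0..}"
      by (subst emeasure_density) auto
    also have "{0::real..} = {0} \<union> {0<..}" by auto
    also have "emeasure N01 ({0} \<union> {0<..}) = emeasure N01 {0} + emeasure N01 {0<..}"
      by (rule plus_emeasure[symmetric]) auto
    also have "emeasure N01 {0} = 0" by (simp add: emeasure_density_singleton)
    finally have e: "emeasure N01 {..0} = emeasure N01 {0<..}" by simp
    have "emeasure N01 {..0} + emeasure N01 {0<..} = emeasure N01 ({..0} \<union> {0<..})"
      by (rule plus_emeasure) auto
    also have "{..0::real} \<union> {0<..} = UNIV" by auto
    finally have "emeasure N01 {..0} + emeasure N01 {..0} = 1"
      using e P.emeasure_space_1 by simp
    then have "measure N01 {..0} + measure N01 {..0} = 1"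
      by (simp add: P.emeasure_eq_measure ennreal_plus[symmetric] del: ennreal_plus)
    then show ?thesis by (simp add: cdf_def)
  qed
qed

lemma z_pos:
  assumes "0 < \<gamma>" "\<gamma> < 1"
  shows "std_normal_quantile (1 - \<gamma> / 2) > 0"
proof -
  interpret real_distribution N01 by (rule N01_cdf_props(1))
  let ?p = "1 - \<gamma> / 2"
  have "\<exists>x>0. cdf N01 x = ?p \<and> (\<forall>y. cdf N01 y = ?p \<longrightarrow> y = x)"
  proof (rule quantile_ex)
    show "cdf N01 0 < ?p" using N01_cdf_props(3) assms by simp
  qed (use assms N01_cdf_props(2,4) cdf_lim_at_top_prob cdf_nondecreasing in auto)
  then obtain x where x: "x > 0" "cdf N01 x = ?p" "\<forall>y. cdf N01 y = ?p \<longrightarrow> y = x" by blast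
  then have "\<exists>!z. cdf N01 z = ?p" by blast
  from theI'[OF this] have "cdf N01 (std_normal_quantile ?p) = ?p"
    unfolding std_normal_quantile_def .
  then have "std_normal_quantile ?p = x" using x(3) by blast
  then show ?thesis using x(1) by simp
qed

lemma law_Sn:
  fixes P :: "'a measure" and M :: nat and \<phi> :: "nat \<Rightarrow> 'a \<Rightarrow> real" and \<nu> \<sigma> :: real
  assumes "prob_space P" and M: "M \<ge> 2" and s: "\<sigma> > 0"
    and ind: "prob_space.indep_vars P (\<lambda>_. borel) \<phi> {1..M}"
    and dist: "\<And>k. k \<in> {1..M} \<Longrightarrow> distributed P lborel (\<phi> k) (normal_density \<nu> \<sigma>)"
    and B: "B \<in> sets borel"
  shows "measure P {\<omega> \<in> space P. Sn M (\<lambda>i\<in>{1..M}. \<phi> i \<omega>) / \<sigma>\<^sup>2 \<in> B} = measure (chi2_distr (M - 1)) B"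
proof -
  interpret P: prob_space P by fact
  let ?X = "\<lambda>\<omega>. \<lambda>i\<in>{1..M}. \<phi> i \<omega>"
  have mphi: "\<phi> i \<in> borel_measurable P" if "i \<in> {1..M}" for i
    using distributed_measurable[OF dist[OF that]] by (simp add: measurable_cong_sets[OF refl sets_lborel])
  have mX: "?X \<in> measurable P (PiM {1..M} (\<lambda>_. Nd \<nu> \<sigma>))"
    by (rule measurable_restrict) (simp add: mphi measurable_cong_sets[OF refl sets_density])
  have d1: "distr P (PiM {1..M} (\<lambda>_. borel)) ?X = PiM {1..M} (\<lambda>i. distr P borel (\<phi> i))"
    using P.indep_vars_iff_distr_eq_PiM'[where I = "{1..M}" and M' = "\<lambda>_. borel" and X = \<phi>] ind M mphi by auto
  have d2: "distr P borel (\<phi> i) = Nd \<nu> \<sigma>" if "i \<in> {1..M}" for i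
  proof -
    have "distr P borel (\<phi> i) = distr P lborel (\<phi> i)" by (rule distr_cong) auto
    also have "\<dots> = Nd \<nu> \<sigma>" by (rule distributed_distr_eq_density[OF dist[OF that]])
    finally show ?thesis .
  qed
  have d3: "distr P (PiM {1..M} (\<lambda>_. Nd \<nu> \<sigma>)) ?X = PiM {1..M} (\<lambda>_. Nd \<nu> \<sigma>)"
  proof -
    have "distr P (PiM {1..M} (\<lambda>_. Nd \<nu> \<sigma>)) ?X = distr P (PiM {1..M} (\<lambda>_. borel)) ?X"
      by (rule distr_cong) (auto intro!: sets_PiM_cong)
    also have "\<dots> = PiM {1..M} (\<lambda>i. distr P borel (\<phi> i))" by (rule d1)
    also have "\<dots> = PiM {1..M} (\<lambda>_. Nd \<nu> \<sigma>)" by (rule PiM_cong) (auto simp: d2)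
    finally show ?thesis .
  qed
  have M1: "M \<ge> 1" "M - 1 \<ge> 1" using M by auto
  have [measurable]: "B \<in> sets borel" by fact
  have setS: "{x \<in> space (PiM {1..M} (\<lambda>_. Nd \<nu> \<sigma>)). Sn M x / \<sigma>\<^sup>2 \<in> B} \<in> sets (PiM {1..M} (\<lambda>_. Nd \<nu> \<sigma>))"
    by measurable
  have "emeasure P {\<omega> \<in> space P. Sn M (?X \<omega>) / \<sigma>\<^sup>2 \<in> B}
      = emeasure (distr P (PiM {1..M} (\<lambda>_. Nd \<nu> \<sigma>)) ?X) {x \<in> space (PiM {1..M} (\<lambda>_. Nd \<nu> \<sigma>)). Sn M x / \<sigma>\<^sup>2 \<in> B}"
  proof -
    have "{\<omega> \<in> space P. Sn M (?X \<omega>) / \<sigma>\<^sup>2 \<in> B} = ?X -` {x \<in> space (PiM {1..M} (\<lambda>_. Nd \<nu> \<sigma>)). Sn M x / \<sigma>\<^sup>2 \<in> B} \<inter> space P"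
      using measurable_space[OF mX] by auto
    then show ?thesis by (simp only: emeasure_distr[OF mX setS])
  qed
  also have "\<dots> = emeasure (PiM {1..M} (\<lambda>_. Nd \<nu> \<sigma>)) {x \<in> space (PiM {1..M} (\<lambda>_. Nd \<nu> \<sigma>)). Sn M x / \<sigma>\<^sup>2 \<in> B}"
    by (simp only: d3)
  also have "\<dots> = (\<integral>\<^sup>+x. indicator B (Sn M x / \<sigma>\<^sup>2) \<partial>PiM {1..M} (\<lambda>_. Nd \<nu> \<sigma>))"
    by (subst nn_integral_indicator[symmetric, OF setS]) (auto intro!: nn_integral_cong simp: indicator_def)
  also have "\<dots> = (\<integral>\<^sup>+u. ennreal (normal_density \<nu> (\<sigma> / sqrt (real M)) u) * Qint (M - 1) (indicator B) \<partial>lborel)"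
  proof -
    have mH: "case_prod (\<lambda>(u::real) t. indicator B t :: ennreal) \<in> borel_measurable (borel \<Otimes>\<^sub>M borel)"
      by measurable
    show ?thesis using spec[OF induct_main[OF s M1(1), of \<nu>], of "\<lambda>u t. indicator B t"] mH
      by simp
  qed
  also have "\<dots> = Qint (M - 1) (indicator B)"
  proof -
    have "\<sigma> / sqrt (real M) > 0" using s M by simp
    from prob_space.emeasure_space_1[OF prob_space_normal_density[OF this, of \<nu>]]
    have "(\<integral>\<^sup>+u. ennreal (normal_density \<nu> (\<sigma> / sqrt (real M)) u) \<partial>lborel) = 1"
      by (simp add: emeasure_density)
    then show ?thesis by (simp add: nn_integral_multc)
  qed
  also have "\<dots> = emeasure (chi2_distr (M - 1)) B"
    using M1 unfolding Qint_def chi2_distr_def by (simp add: emeasure_density)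
  finally show ?thesis
    by (simp add: measure_def)
qed

lemma ev1:
  fixes a z s L R \<sigma> :: real
  assumes "z > 0"
  shows "(a - z * \<sigma> \<in> {a - z * s * R .. a - z * s * L} \<and> a + z * \<sigma> \<in> {a + z * s * L .. a + z * s * R})
     \<longleftrightarrow> (s * L \<le> \<sigma> \<and> \<sigma> \<le> s * R)"
  using assms by (auto simp: mult.assoc)

lemma ev2:
  fixes a z s R \<sigma> :: real
  assumes "z > 0" "\<sigma> > 0"
  shows "({a - z * s * R .. a + z * s * R} \<supseteq> {a - z * \<sigma> .. a + z * \<sigma>}) \<longleftrightarrow> \<sigma> \<le> s * R"
proof -
  have ne: "a - z * \<sigma> \<le> a + z * \<sigma>" using assms by simp
  have "({a - z * s * R .. a + z * s * R} \<supseteq> {a - z * \<sigma> .. a + z * \<sigma>}) \<longleftrightarrow>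
     (a - z * s * R \<le> a - z * \<sigma> \<and> a + z * \<sigma> \<le> a + z * s * R)"
    using ne by (simp add: atLeastatMost_subset_iff)
  also have "\<dots> \<longleftrightarrow> \<sigma> \<le> s * R" using assms by (auto simp: mult.assoc)
  finally show ?thesis .
qed

lemma ev3:
  fixes a z s L \<sigma> :: real
  assumes "z > 0" "s * L \<ge> 0"
  shows "({a - z * s * L .. a + z * s * L} \<subseteq> {a - z * \<sigma> .. a + z * \<sigma>}) \<longleftrightarrow> s * L \<le> \<sigma>"
proof -
  have ne: "a - z * s * L \<le> a + z * s * L" using assms by (simp add: mult.assoc)
  have "({a - z * s * L .. a + z * s * L} \<subseteq> {a - z * \<sigma> .. a + z * \<sigma>}) \<longleftrightarrow>
     (a - z * \<sigma> \<le> a - z * s * L \<and> a + z * s * L \<le> a + z * \<sigma>)"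
    using ne by (simp add: atLeastatMost_subset_iff)
  also have "\<dots> \<longleftrightarrow> s * L \<le> \<sigma>" using assms by (auto simp: mult.assoc)
  finally show ?thesis .
qed

lemma sqrt_ineq:
  fixes t q \<sigma> :: real
  assumes "q > 0" "t \<ge> 0" "\<sigma> > 0"
  shows "\<sigma> * sqrt (t / q) \<le> \<sigma> \<longleftrightarrow> t \<le> q" and "\<sigma> \<le> \<sigma> * sqrt (t / q) \<longleftrightarrow> q \<le> t"
proof -
  have "\<sigma> * sqrt (t / q) \<le> \<sigma> \<longleftrightarrow> sqrt (t / q) \<le> 1" using assms by simp
  also have "\<dots> \<longleftrightarrow> t / q \<le> 1" by simp
  also have "\<dots> \<longleftrightarrow> t \<le> q" using assms by (simp add: divide_le_eq_1)
  finally show "\<sigma> * sqrt (t / q) \<le> \<sigma> \<longleftrightarrow> t \<le> q" .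
  have "\<sigma> \<le> \<sigma> * sqrt (t / q) \<longleftrightarrow> 1 \<le> sqrt (t / q)" using assms by simp
  also have "\<dots> \<longleftrightarrow> 1 \<le> t / q" by simp
  also have "\<dots> \<longleftrightarrow> q \<le> t" using assms by (simp add: le_divide_eq_1)
  finally show "\<sigma> \<le> \<sigma> * sqrt (t / q) \<longleftrightarrow> q \<le> t" .
qed

lemma chi2_interval_measures:
  assumes k: "k \<ge> 1" and a: "0 < \<alpha>" "\<alpha> < 1"
  defines "q1 \<equiv> chi2_quantile k (\<alpha> / 2)" and "q2 \<equiv> chi2_quantile k (1 - \<alpha> / 2)"
  shows "q1 > 0" "q2 > 0" "measure (chi2_distr k) {q1..q2} = 1 - \<alpha>"
    "measure (chi2_distr k) {q1..} = 1 - \<alpha> / 2" "measure (chi2_distr k) {..q2} = 1 - \<alpha> / 2"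
proof -
  interpret real_distribution "chi2_distr k" by (rule chi2_cdf_props(1)[OF k])
  have h1: "q1 > 0" "cdf (chi2_distr k) q1 = \<alpha> / 2"
    using chi2_quantile_props[OF k, of "\<alpha> / 2"] a unfolding q1_def by auto
  have h2: "q2 > 0" "cdf (chi2_distr k) q2 = 1 - \<alpha> / 2"
    using chi2_quantile_props[OF k, of "1 - \<alpha> / 2"] a unfolding q2_def by auto
  show "q1 > 0" "q2 > 0" using h1 h2 by auto
  have q12: "q1 < q2"
  proof (rule ccontr)
    assume "\<not> q1 < q2"
    then have "cdf (chi2_distr k) q2 \<le> cdf (chi2_distr k) q1" by (intro cdf_nondecreasing) simp
    then show False using h1 h2 a by simp
  qed
  have s0: "measure (chi2_distr k) {x} = 0" for x
    using chi2_cdf_props(2)[OF k, of x] by (simp add: isCont_cdf)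
  have "measure (chi2_distr k) {q1..q2} = measure (chi2_distr k) ({q1} \<union> {q1<..q2})"
    using q12 by (intro arg_cong[where f = "measure (chi2_distr k)"]) auto
  also have "\<dots> = measure (chi2_distr k) {q1} + measure (chi2_distr k) {q1<..q2}"
    by (rule finite_measure_Union) auto
  also have "\<dots> = cdf (chi2_distr k) q2 - cdf (chi2_distr k) q1"
    using cdf_diff_eq[OF q12] s0 by simp
  finally show "measure (chi2_distr k) {q1..q2} = 1 - \<alpha>" using h1 h2 by simp
  have "measure (chi2_distr k) {q1..} = measure (chi2_distr k) ({q1} \<union> (space (chi2_distr k) - {..q1}))"
    by (intro arg_cong[where f = "measure (chi2_distr k)"]) auto
  also have "\<dots> = measure (chi2_distr k) {q1} + measure (chi2_distr k) (space (chi2_distr k) - {..q1})"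
    by (rule finite_measure_Union) auto
  also have "\<dots> = 1 - cdf (chi2_distr k) q1"
    using s0 prob_compl[of "{..q1}"] by (simp add: cdf_def)
  finally show "measure (chi2_distr k) {q1..} = 1 - \<alpha> / 2" using h1 by simp
  show "measure (chi2_distr k) {..q2} = 1 - \<alpha> / 2"
    using h2 by (simp add: cdf_def)
qed

theorem mainTheorem2:
  fixes P :: "'a measure" and M :: nat and \<phi> :: "nat \<Rightarrow> 'a \<Rightarrow> real"
    and \<nu> \<sigma> \<alpha> \<gamma> \<phi>MAP :: real
  assumes "prob_space P"
    and "M \<ge> 2"
    and "\<sigma> > 0"
    and "prob_space.indep_vars P (\<lambda>_. borel) \<phi> {1..M}"
    and "\<And>k. k \<in> {1..M} \<Longrightarrow> distributed P lborel (\<phi> k) (normal_density \<nu> \<sigma>)"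
    and "0 < \<alpha>" "\<alpha> < 1" "0 < \<gamma>" "\<gamma> < 1"
  defines "shat \<equiv> \<lambda>\<omega>. sqrt ((\<Sum>k=1..M. (\<phi> k \<omega> - (\<Sum>j=1..M. \<phi> j \<omega>) / real M)^2) / (real M - 1))"
    and "z \<equiv> std_normal_quantile (1 - \<gamma> / 2)"
    and "L \<equiv> sqrt ((real M - 1) / chi2_quantile (M - 1) (1 - \<alpha> / 2))"
    and "R \<equiv> sqrt ((real M - 1) / chi2_quantile (M - 1) (\<alpha> / 2))"
  shows "measure P {\<omega> \<in> space P.
             \<phi>MAP - z * \<sigma> \<in> {\<phi>MAP - z * shat \<omega> * R .. \<phi>MAP - z * shat \<omega> * L} \<and>
             \<phi>MAP + z * \<sigma> \<in> {\<phi>MAP + z * shat \<omega> * L .. \<phi>MAP + z * shat \<omega> * R}} = 1 - \<alpha> \<and>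
         measure P {\<omega> \<in> space P.
             {\<phi>MAP - z * shat \<omega> * R .. \<phi>MAP + z * shat \<omega> * R} \<supseteq> {\<phi>MAP - z * \<sigma> .. \<phi>MAP + z * \<sigma>}} = 1 - \<alpha> / 2 \<and>
         measure P {\<omega> \<in> space P.
             {\<phi>MAP - z * shat \<omega> * L .. \<phi>MAP + z * shat \<omega> * L} \<subseteq> {\<phi>MAP - z * \<sigma> .. \<phi>MAP + z * \<sigma>}} = 1 - \<alpha> / 2"
proof -
  note A = assms
  have M2: "M \<ge> 2" and s: "\<sigma> > 0" and a: "0 < \<alpha>" "\<alpha> < 1" and g: "0 < \<gamma>" "\<gamma> < 1"
    using assms by auto
  have k: "M - 1 \<ge> 1" using M2 by simp
  define T where "T \<omega> = Sn M (\<lambda>i\<in>{1..M}. \<phi> i \<omega>) / \<sigma>\<^sup>2" for \<omega>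
  have law: "measure P {\<omega> \<in> space P. T \<omega> \<in> B} = measure (chi2_distr (M - 1)) B" if "B \<in> sets borel" for B
    unfolding T_def using law_Sn[OF A(1-5) that] .
  define q1 where "q1 = chi2_quantile (M - 1) (\<alpha> / 2)"
  define q2 where "q2 = chi2_quantile (M - 1) (1 - \<alpha> / 2)"
  note CI = chi2_interval_measures[OF k a, folded q1_def q2_def]
  have z: "z > 0" unfolding z_def using z_pos[OF g] .
  have rM: "real M - 1 > 0" using M2 by simp
  have Tnn: "T \<omega> \<ge> 0" for \<omega>
    unfolding T_def Sn_def by (intro divide_nonneg_pos sum_nonneg) (use s in auto)
  have shat_eq: "shat \<omega> = \<sigma> * sqrt (T \<omega> / (real M - 1))" for \<omega>
  proof -
    have "Sn M (\<lambda>i\<in>{1..M}. \<phi> i \<omega>) = (\<Sum>k=1..M. (\<phi> k \<omega> - (\<Sum>j=1..M. \<phi> j \<omega>) / real M)^2)"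
      unfolding Sn_def mn_def by (intro sum.cong refl) (simp add: sum.cong[OF refl, of "{1..M}" "\<lambda>i\<in>{1..M}. \<phi> i \<omega>" "\<lambda>j. \<phi> j \<omega>"])
    then have "shat \<omega> = sqrt (\<sigma>\<^sup>2 * (T \<omega> / (real M - 1)))"
      unfolding shat_def T_def using s by simp
    also have "\<dots> = \<sigma> * sqrt (T \<omega> / (real M - 1))"
      by (subst real_sqrt_mult) (use s in simp)
    finally show ?thesis .
  qed
  have sL: "shat \<omega> * L = \<sigma> * sqrt (T \<omega> / q2)" for \<omega>
  proof -
    have "shat \<omega> * L = \<sigma> * (sqrt (T \<omega> / (real M - 1)) * sqrt ((real M - 1) / q2))"
      unfolding shat_eq L_def q2_def by simp
    also have "\<dots> = \<sigma> * sqrt (T \<omega> / q2)"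
      using rM CI(2) by (simp add: real_sqrt_mult[symmetric])
    finally show ?thesis .
  qed
  have sR: "shat \<omega> * R = \<sigma> * sqrt (T \<omega> / q1)" for \<omega>
  proof -
    have "shat \<omega> * R = \<sigma> * (sqrt (T \<omega> / (real M - 1)) * sqrt ((real M - 1) / q1))"
      unfolding shat_eq R_def q1_def by simp
    also have "\<dots> = \<sigma> * sqrt (T \<omega> / q1)"
      using rM CI(1) by (simp add: real_sqrt_mult[symmetric])
    finally show ?thesis .
  qed
  have e1: "{\<omega> \<in> space P.
             \<phi>MAP - z * \<sigma> \<in> {\<phi>MAP - z * shat \<omega> * R .. \<phi>MAP - z * shat \<omega> * L} \<and>
             \<phi>MAP + z * \<sigma> \<in> {\<phi>MAP + z * shat \<omega> * L .. \<phi>MAP + z * shat \<omega> * R}}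
      = {\<omega> \<in> space P. T \<omega> \<in> {q1..q2}}"
  proof (intro Collect_cong conj_cong refl)
    fix \<omega>
    show "(\<phi>MAP - z * \<sigma> \<in> {\<phi>MAP - z * shat \<omega> * R .. \<phi>MAP - z * shat \<omega> * L} \<and>
             \<phi>MAP + z * \<sigma> \<in> {\<phi>MAP + z * shat \<omega> * L .. \<phi>MAP + z * shat \<omega> * R}) = (T \<omega> \<in> {q1..q2})"
      unfolding ev1[OF z] sL sR using sqrt_ineq[OF CI(1) Tnn s] sqrt_ineq[OF CI(2) Tnn s] by auto
  qed
  have e2: "{\<omega> \<in> space P.
             {\<phi>MAP - z * shat \<omega> * R .. \<phi>MAP + z * shat \<omega> * R} \<supseteq> {\<phi>MAP - z * \<sigma> .. \<phi>MAP + z * \<sigma>}}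
      = {\<omega> \<in> space P. T \<omega> \<in> {q1..}}"
  proof (intro Collect_cong conj_cong refl)
    fix \<omega>
    show "({\<phi>MAP - z * shat \<omega> * R .. \<phi>MAP + z * shat \<omega> * R} \<supseteq> {\<phi>MAP - z * \<sigma> .. \<phi>MAP + z * \<sigma>}) = (T \<omega> \<in> {q1..})"
      unfolding ev2[OF z s] sR using sqrt_ineq[OF CI(1) Tnn s] by auto
  qed
  have e3: "{\<omega> \<in> space P.
             {\<phi>MAP - z * shat \<omega> * L .. \<phi>MAP + z * shat \<omega> * L} \<subseteq> {\<phi>MAP - z * \<sigma> .. \<phi>MAP + z * \<sigma>}}
      = {\<omega> \<in> space P. T \<omega> \<in> {..q2}}"
  proof (intro Collect_cong conj_cong refl)
    fix \<omega>
    have nn: "shat \<omega> * L \<ge> 0" unfolding sL using s Tnn[of \<omega>] CI(2) by (simp add: less_imp_le)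
    show "({\<phi>MAP - z * shat \<omega> * L .. \<phi>MAP + z * shat \<omega> * L} \<subseteq> {\<phi>MAP - z * \<sigma> .. \<phi>MAP + z * \<sigma>}) = (T \<omega> \<in> {..q2})"
      unfolding ev3[OF z nn] unfolding sL using sqrt_ineq[OF CI(2) Tnn s] by auto
  qed
  show ?thesis
    unfolding e1 e2 e3 using law[of "{q1..q2}"] law[of "{q1..}"] law[of "{..q2}"] CI(3-5) by simp
qed

end
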